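(* Consider any fair, well-formed execution of COP as described in the context, with history $\sigma$ (and $S$ correct or Byzantine). If some client $C_k$ confirms an operation $o_1$ before an operation $o_2$, then $o_2$ does not precede $o_1$ in $\sigma$ (i.e., it is not the case that $o_2$ completes before $o_1$ is invoked).
   Context: System model. Clients $C_1,\dots,C_n$ and server $S$ in an asynchronous system, each client connected to $S$ by a reliable FIFO channel; clients are correct; $S$ is correct or Byzantine (may send arbitrary messages). Executions are fair and well-formed. Functionality. $F$ is deterministic over states $\mathcal{S}$, operations $\mathcal{O}$, responses $\mathcal{R}$: $F(s,o)=(s',r)$, extended to sequences by applying operations in order. $\mathrm{commute}_F(s,\rho_1,\rho_2)$ is true iff every interleaving of sequences $\rho_1,\rho_2$ (preserving each one's internal order) executed from $s$ yields the same final state and the same respective responses. Cryptography (ideal). $\mathrm{hash}$ is ideal collision-free; $\mathrm{sign}_i$ is invocable only by $C_i$ and $\mathrm{verify}_i(\phi,m)$ is true iff $C_i$ previously executed $\mathrm{sign}_i(m)$ obtaining $\phi$. $\|$ is concatenation. COP client $C_i$. State: $u$ (initially $\bot$); $c$ (initially $0$); map $H$ with $H[0]=\mathrm{null}$; map $Z$ to $\{\mathrm{success},\mathrm{abort}\}$; state $s$ (initially $s_0$). (1) On invocation of $o$: $u\leftarrow o$, send $\langle\mathrm{invoke},o,c,\mathrm{sign}_i(\mathrm{invoke}\|o\|i)\rangle$ to $S$. (2) On $\langle\mathrm{reply},\omega\rangle$: $\gamma,\mu\leftarrow\langle\rangle$. For $k=1,\dots,\mathrm{length}(\omega)$: $(o,j,\tau)=\omega[k]$,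 $l=c+k$; halt if $\mathrm{verify}_j(\tau,\mathrm{invoke}\|o\|j)$ fails; if $H[l]$ undefined set $H[l]\leftarrow\mathrm{hash}(H[l-1]\|o\|l\|j)$, else halt if $H[l]\neq\mathrm{hash}(H[l-1]\|o\|l\|j)$; if $j=i$ and $Z[l]=\mathrm{success}$ append $o$ to $\mu$, else if $j\neq i$ append $o$ to $\gamma$. Halt if $\omega$ is empty or its last entry has operation $\neq u$ or index $\neq i$. $(a,r)\leftarrow F(s,\mu)$. If $\mathrm{commute}_F(a,\langle u\rangle,\gamma)$: $(a,r)\leftarrow F(a,u)$, $Z[l]\leftarrow\mathrm{success}$; else $r\leftarrow\bot$, $Z[l]\leftarrow\mathrm{abort}$. Send $\langle\mathrm{commit},u,l,H[l],Z[l],\mathrm{sign}_i(\mathrm{commit}\|u\|l\|H[l]\|Z[l])\rangle$ to $S$, set $u\leftarrow\bot$, output $r$. (3) On $\langle\mathrm{broadcast},o,q,h,z,\phi,j\rangle$: halt unless $q=c+1$ and $\mathrm{verify}_j(\phi,\mathrm{commit}\|o\|q\|h\|z)$; if $H[q]$ undefined set $H[q]\leftarrow\mathrm{hash}(H[q-1]\|o\|q\|j)$; halt if $h\neq H[q]$; if $z=\mathrm{success}$, $(s,\cdot)\leftarrow F(s,o)$; $c\leftarrow c+1$. COP server $S$ (when correct). State $t=0$, $b=0$, maps $I,O$ empty. On $\langle\mathrm{invoke},o,c,\tau\rangle$ from $C_i$: $t\leftarrow t+1$, $I[t]\leftarrow(o,i,\tau)$, send $\langle\mathrm{reply},\langle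 I[c+1],\dots,I[t]\rangle\rangle$ to $C_i$. On $\langle\mathrm{commit},o,q,h,z,\phi\rangle$ from $C_i$: $O[q]\leftarrow(o,h,z,\phi,i)$; while $O[b+1]$ defined: $b\leftarrow b+1$, send $\langle\mathrm{broadcast},o',b,h',z',\phi',j\rangle$ to all clients where $(o',h',z',\phi',j)=O[b]$. Terminology. The history $\sigma$ is the sequence of invocation and response events at the clients; $o$ precedes $o'$ in $\sigma$ if $o$ completes before $o'$ is invoked. A client commits an operation when it issues the commit signature in step (2). A client confirms an operation $o$ when it processes a broadcast message for $o$ in step (3) passing all checks. *)

theory Defs
  imports Main
begin

section \<open>Model of the COP protocol with ideal cryptography\<close>

text \<open>Ideal collision-free hash: hash values are free terms, so
  hash(H[l-1] || op || l || j) is represented by the constructor HHash.\<close>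
datatype 'o hv = HNull | HHash "'o hv" 'o nat nat

datatype zv = Success | Abort

text \<open>Signed payloads: invoke||op||i and commit||op||l||h||z.\<close>
datatype 'o payload = PInv 'o nat | PCom 'o nat "'o hv" zv

datatype 'o sigv = Sig nat "'o payload"

text \<open>verify_j(phi, m) holds iff C_j previously executed sign_j(m) obtaining phi;
  sg is the set of (signer, payload) pairs signed so far.\<close>
definition verify :: "(nat \<times> 'o payload) set \<Rightarrow> nat \<Rightarrow> 'o sigv \<Rightarrow> 'o payload \<Rightarrow> bool" where
  "verify sg j phi m \<longleftrightarrow> phi = Sig j m \<and> (j, m) \<in> sg"

definition Fstate :: "('s \<Rightarrow> 'o \<Rightarrow> 's \<times> 'r) \<Rightarrow> 's \<Rightarrow> 'o list \<Rightarrow> 's" where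
  "Fstate F s ops = fold (\<lambda>op s. fst (F s op)) ops s"

fun runT :: "('s \<Rightarrow> 'o \<Rightarrow> 's \<times> 'r) \<Rightarrow> 's \<Rightarrow> ('o + 'o) list \<Rightarrow> 's \<times> ('r + 'r) list" where
  "runT F s [] = (s, [])"
| "runT F s (x # xs) =
     (let (s', r) = F s (case x of Inl op \<Rightarrow> op | Inr op \<Rightarrow> op);
          (s'', rs) = runT F s' xs
      in (s'', (case x of Inl _ \<Rightarrow> Inl r | Inr _ \<Rightarrow> Inr r) # rs))"

definition outc :: "'s \<times> ('r + 'r) list \<Rightarrow> 's \<times> 'r list \<times> 'r list" where
  "outc p = (fst p, map projl (filter isl (snd p)), map projr (filter (Not \<circ> isl) (snd p)))"

definition commute :: "('s \<Rightarrow> 'o \<Rightarrow> 's \<times> 'r) \<Rightarrow> 's \<Rightarrow> 'o list \<Rightarrow> 'o list \<Rightarrow> bool" where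
  "commute F s rho1 rho2 \<longleftrightarrow>
     (\<forall>w \<in> shuffles (map Inl rho1) (map Inr rho2).
      \<forall>w' \<in> shuffles (map Inl rho1) (map Inr rho2).
        outc (runT F s w) = outc (runT F s w'))"

record ('o, 's) cstate =
  cu :: "'o option"
  cc :: nat
  cH :: "nat \<Rightarrow> 'o hv option"
  cZ :: "nat \<Rightarrow> zv option"
  cs :: 's
  chalt :: bool

type_synonym ('o, 's) gstate = "(nat \<Rightarrow> ('o, 's) cstate) \<times> (nat \<times> 'o payload) set"

text \<open>Events: an invocation at a client, or the delivery at client i of a message
  from the (possibly Byzantine) server, whose content is arbitrary.\<close>
datatype 'o event =
    EInv nat 'o
  | EReply nat "('o \<times> nat \<times> 'o sigv) list"
  | EBcast nat 'o nat "'o hv" zv "'o sigv" nat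

datatype ('o, 'r) obs =
    OInvoke nat 'o
  | OResp nat 'o "'r option"
  | OConfirm nat 'o
  | OHalt nat

text \<open>The loop of step (2); None means the client halts.\<close>
fun scan :: "(nat \<times> 'o payload) set \<Rightarrow> nat \<Rightarrow> nat \<Rightarrow> (nat \<Rightarrow> zv option) \<Rightarrow> nat
   \<Rightarrow> ('o \<times> nat \<times> 'o sigv) list \<Rightarrow> (nat \<Rightarrow> 'o hv option) \<Rightarrow> 'o list \<Rightarrow> 'o list
   \<Rightarrow> ((nat \<Rightarrow> 'o hv option) \<times> 'o list \<times> 'o list) option" where
  "scan sg i c Z k [] H \<gamma> \<mu> = Some (H, \<gamma>, \<mu>)"
| "scan sg i c Z k ((op, j, \<tau>) # rest) H \<gamma> \<mu> =
    (let l = c + k; hv = HHash (the (H (l - 1))) op l j in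
     if \<not> verify sg j \<tau> (PInv op j) then None
     else if H l \<noteq> None \<and> H l \<noteq> Some hv then None
     else scan sg i c Z (Suc k) rest (if H l = None then H(l \<mapsto> hv) else H)
            (if j \<noteq> i then \<gamma> @ [op] else \<gamma>)
            (if j = i \<and> Z l = Some Success then \<mu> @ [op] else \<mu>))"

definition halt_at :: "('o, 's) gstate \<Rightarrow> nat \<Rightarrow> (('o, 's) gstate \<times> ('o, 'r) obs) option" where
  "halt_at g i = Some (((fst g)(i := (fst g i)\<lparr>chalt := True\<rparr>), snd g), OHalt i)"

definition step :: "('s \<Rightarrow> 'o \<Rightarrow> 's \<times> 'r) \<Rightarrow> nat \<Rightarrow> ('o, 's) gstate \<Rightarrow> 'o event
                    \<Rightarrow> (('o, 's) gstate \<times> ('o, 'r) obs) option" where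
  "step F n g e = (let C = fst g; sg = snd g in
    case e of
      EInv i op \<Rightarrow>
        (if i < n \<and> \<not> chalt (C i) \<and> cu (C i) = None
         then Some ((C(i := (C i)\<lparr>cu := Some op\<rparr>), insert (i, PInv op i) sg), OInvoke i op)
         else None)
    | EReply i \<omega> \<Rightarrow>
        (if i < n \<and> \<not> chalt (C i) then
          (let st = C i in
           case scan sg i (cc st) (cZ st) 1 \<omega> (cH st) [] [] of
             None \<Rightarrow> halt_at g i
           | Some (H, \<gamma>, \<mu>) \<Rightarrow>
               (if \<omega> = [] \<or> Some (fst (last \<omega>)) \<noteq> cu st \<or> fst (snd (last \<omega>)) \<noteq> i
                then halt_at g i
                else
                  (let l = cc st + length \<omega>;
                       u = the (cu st);
                       a = Fstate F (cs st) \<mu>;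
                       ok = commute F a [u] \<gamma>;
                       z = (if ok then Success else Abort);
                       r = (if ok then Some (snd (F a u)) else None);
                       st' = st\<lparr>cH := H, cZ := (cZ st)(l \<mapsto> z), cu := None\<rparr>
                   in Some ((C(i := st'), insert (i, PCom u l (the (H l)) z) sg), OResp i u r))))
         else None)
    | EBcast i op q h z \<phi> j \<Rightarrow>
        (if i < n \<and> \<not> chalt (C i) then
          (let st = C i in
           if q = cc st + 1 \<and> verify sg j \<phi> (PCom op q h z) then
             (let H' = (if cH st q = None
                        then (cH st)(q \<mapsto> HHash (the (cH st (q - 1))) op q j) else cH st)
              in if H' q \<noteq> Some h then halt_at g i
                 else Some ((C(i := st\<lparr>cH := H',
                                      cs := (if z = Success then fst (F (cs st) op) else cs st),
                                      cc := Suc (cc st)\<rparr>), sg), OConfirm i op))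
           else halt_at g i)
         else None))"

definition init :: "'s \<Rightarrow> ('o, 's) gstate" where
  "init s0 = ((\<lambda>i. \<lparr>cu = None, cc = 0, cH = [0 \<mapsto> HNull], cZ = Map.empty, cs = s0, chalt = False\<rparr>), {})"

fun run :: "('s \<Rightarrow> 'o \<Rightarrow> 's \<times> 'r) \<Rightarrow> nat \<Rightarrow> ('o, 's) gstate \<Rightarrow> 'o event list
            \<Rightarrow> ('o, 'r) obs list option" where
  "run F n g [] = Some []"
| "run F n g (e # es) =
     (case step F n g e of
        None \<Rightarrow> None
      | Some (g', ob) \<Rightarrow> map_option (Cons ob) (run F n g' es))"

definition invoked :: "('o, 'r) obs list \<Rightarrow> 'o list" where
  "invoked obs = concat (map (\<lambda>x. case x of OInvoke i op \<Rightarrow> [op] | _ \<Rightarrow> []) obs)"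

definition precedes :: "('o, 'r) obs list \<Rightarrow> 'o \<Rightarrow> 'o \<Rightarrow> bool" where
  "precedes obs op op' \<longleftrightarrow>
     (\<exists>a b i i' r. a < b \<and> b < length obs \<and> obs ! a = OResp i op r \<and> obs ! b = OInvoke i' op')"

end

theory Submission
  imports Defs
begin

fun ops :: "'o hv \<Rightarrow> 'o set" where
  "ops HNull = {}"
| "ops (HHash x op l j) = insert op (ops x)"

definition chain :: "(nat \<Rightarrow> 'o hv option) \<Rightarrow> bool" where
  "chain H \<longleftrightarrow> (\<forall>l h. H l = Some h \<longrightarrow> 0 < l \<longrightarrow> (\<exists>x op j. h = HHash x op l j \<and> H (l - 1) = Some x))"

lemma scan_ext:
  "scan sg i c Z k \<omega> H \<gamma> \<mu> = Some (H', \<gamma>', \<mu>') \<Longrightarrow> H \<subseteq>\<^sub>m H'"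
proof (induction \<omega> arbitrary: k H \<gamma> \<mu>)
  case Nil then show ?case by simp
next
  case (Cons a \<omega>)
  obtain op j \<tau> where a: "a = (op, j, \<tau>)" by (cases a) auto
  let ?l = "c + k" let ?hv = "HHash (the (H (?l - 1))) op ?l j"
  have v: "verify sg j \<tau> (PInv op j)" and hl: "\<not> (H ?l \<noteq> None \<and> H ?l \<noteq> Some ?hv)"
    and r: "scan sg i c Z (Suc k) \<omega> (if H ?l = None then H(?l \<mapsto> ?hv) else H)
            (if j \<noteq> i then \<gamma> @ [op] else \<gamma>)
            (if j = i \<and> Z ?l = Some Success then \<mu> @ [op] else \<mu>) = Some (H', \<gamma>', \<mu>')"
    using Cons.prems a by (auto simp: Let_def split: if_splits)
  have "H \<subseteq>\<^sub>m (if H ?l = None then H(?l \<mapsto> ?hv) else H)"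
    by (auto simp: map_le_def)
  with Cons.IH[OF r] show ?case using map_le_trans by blast
qed

lemma scan_props:
  assumes "scan sg i c Z k \<omega> H \<gamma> \<mu> = Some (H', \<gamma>', \<mu>')" "0 < k" "H (c + k - 1) \<noteq> None"
    "chain H" "\<forall>l h. H l = Some h \<longrightarrow> ops h \<subseteq> S" "\<forall>j op. (j, PInv op j) \<in> sg \<longrightarrow> op \<in> S"
  shows "chain H' \<and> (\<forall>l h. H' l = Some h \<longrightarrow> ops h \<subseteq> S) \<and>
    (\<forall>k'<length \<omega>. \<exists>x. H' (c + k + k') = Some (HHash x (fst (\<omega>!k')) (c + k + k') (fst (snd (\<omega>!k')))))"
  using assms
proof (induction \<omega> arbitrary: k H \<gamma> \<mu>)
  case Nil then show ?case by simp
next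
  case (Cons a \<omega>)
  obtain op j \<tau> where a: "a = (op, j, \<tau>)" by (cases a) auto
  let ?l = "c + k" let ?hv = "HHash (the (H (?l - 1))) op ?l j"
  let ?H1 = "(if H ?l = None then H(?l \<mapsto> ?hv) else H)"
  have v: "verify sg j \<tau> (PInv op j)" and hl: "\<not> (H ?l \<noteq> None \<and> H ?l \<noteq> Some ?hv)"
    and r: "scan sg i c Z (Suc k) \<omega> ?H1
            (if j \<noteq> i then \<gamma> @ [op] else \<gamma>)
            (if j = i \<and> Z ?l = Some Success then \<mu> @ [op] else \<mu>) = Some (H', \<gamma>', \<mu>')"
    using Cons.prems a by (auto simp: Let_def split: if_splits)
  have opS: "op \<in> S" using v Cons.prems(6) by (auto simp: verify_def)
  obtain x where x: "H (?l - 1) = Some x" using Cons.prems(3) by auto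
  have H1l: "?H1 ?l = Some ?hv" using hl by auto
  have H1ext: "H \<subseteq>\<^sub>m ?H1" by (auto simp: map_le_def)
  have ch1: "chain ?H1"
    unfolding chain_def
  proof (intro allI impI)
    fix l h assume a1: "?H1 l = Some h" and a2: "0 < l"
    show "\<exists>x op j. h = HHash x op l j \<and> ?H1 (l - 1) = Some x"
    proof (cases "H ?l = None")
      case True
      show ?thesis
      proof (cases "l = ?l")
        case True with a1 x \<open>H ?l = None\<close> Cons.prems(2) show ?thesis by auto
      next
        case False
        then have "H l = Some h" using a1 True by auto
        then obtain x' op' j' where "h = HHash x' op' l j'" "H (l - 1) = Some x'"
          using Cons.prems(4) a2 unfolding chain_def by blast
        moreover have "l - 1 \<noteq> ?l" using True \<open>H (l - 1) = Some x'\<close> by auto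
        ultimately show ?thesis using True by auto
      qed
    next
      case False
      then have e: "?H1 = H" by auto
      then have "H l = Some h" using a1 by simp
      then show ?thesis using e a2 Cons.prems(4) unfolding chain_def by simp
    qed
  qed
  have ops1: "\<forall>l h. ?H1 l = Some h \<longrightarrow> ops h \<subseteq> S"
    using Cons.prems(5) x opS by (auto split: if_splits)
  have d1: "?H1 (c + Suc k - 1) \<noteq> None" using H1l by simp
  have IH: "chain H' \<and> (\<forall>l h. H' l = Some h \<longrightarrow> ops h \<subseteq> S) \<and>
    (\<forall>k'<length \<omega>. \<exists>x. H' (c + Suc k + k') = Some (HHash x (fst (\<omega>!k')) (c + Suc k + k') (fst (snd (\<omega>!k')))))"
    using Cons.IH[OF r _ d1 ch1 ops1 Cons.prems(6)] by simp
  have "H' ?l = Some ?hv" using scan_ext[OF r] H1l by (auto simp: map_le_def dom_def)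
  moreover have "\<forall>k'<length (a # \<omega>). \<exists>x. H' (c + k + k') = Some (HHash x (fst ((a#\<omega>)!k')) (c + k + k') (fst (snd ((a#\<omega>)!k'))))"
  proof (intro allI impI)
    fix k' assume "k' < length (a # \<omega>)"
    show "\<exists>x. H' (c + k + k') = Some (HHash x (fst ((a#\<omega>)!k')) (c + k + k') (fst (snd ((a#\<omega>)!k'))))"
    proof (cases k')
      case 0 then show ?thesis using \<open>H' ?l = Some ?hv\<close> a by simp
    next
      case (Suc m) then show ?thesis using IH \<open>k' < length (a # \<omega>)\<close> by auto
    qed
  qed
  ultimately show ?case using IH by blast
qed

definition resps :: "('o, 'r) obs list \<Rightarrow> 'o list" where
  "resps obs = concat (map (\<lambda>x. case x of OResp i op r \<Rightarrow> [op] | _ \<Rightarrow> []) obs)"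

definition Inv :: "(nat \<Rightarrow> ('o, 's) cstate) \<Rightarrow> (nat \<times> 'o payload) set \<Rightarrow> ('o, 'r) obs list \<Rightarrow> bool" where
  "Inv C sg pre \<longleftrightarrow>
   (\<forall>i. cH (C i) (cc (C i)) \<noteq> None) \<and>
   (\<forall>i. chain (cH (C i))) \<and>
   (\<forall>i l h. cH (C i) l = Some h \<longrightarrow> ops h \<subseteq> set (invoked pre)) \<and>
   (\<forall>j op. (j, PInv op j) \<in> sg \<longrightarrow> op \<in> set (invoked pre)) \<and>
   (\<forall>j op q h z. (j, PCom op q h z) \<in> sg \<longrightarrow> (\<exists>x j'. h = HHash x op q j') \<and>
       (\<exists>p<length pre. \<exists>r. pre!p = OResp j op r \<and> ops h \<subseteq> set (invoked (take p pre)))) \<and>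
   (\<forall>i x. cu (C i) = Some x \<longrightarrow> x \<notin> set (resps pre) \<and> x \<in> set (invoked pre)) \<and>
   (\<forall>i i' x. cu (C i) = Some x \<longrightarrow> cu (C i') = Some x \<longrightarrow> i = i') \<and>
   set (resps pre) \<subseteq> set (invoked pre) \<and> distinct (resps pre)"

lemma Inv_init: "Inv (fst (init s0)) (snd (init s0)) []"
  by (simp add: Inv_def init_def chain_def resps_def invoked_def)

lemma take_app_le: "p \<le> length pre \<Longrightarrow> take p (pre @ xs) = take p pre" by simp

lemma obs_app_simps:
  "invoked (pre @ [x]) = invoked pre @ invoked [x]" "resps (pre @ [x]) = resps pre @ resps [x]"
  "invoked [OHalt i] = []" "resps [OHalt i] = []" "invoked [OConfirm i op] = []" "resps [OConfirm i op] = []"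
  "invoked [OInvoke i op] = [op]" "resps [OInvoke i op] = []"
  "invoked [OResp i op r] = []" "resps [OResp i op r] = [op]"
  by (auto simp: invoked_def resps_def)

lemma com_ext:
  assumes "\<exists>p<length pre. \<exists>r. pre!p = OResp j op r \<and> S \<subseteq> set (invoked (take p pre))"
  shows "\<exists>p<length (pre @ xs). \<exists>r. (pre @ xs)!p = OResp j op r \<and> S \<subseteq> set (invoked (take p (pre @ xs)))"
proof -
  obtain p r where "p < length pre" "pre!p = OResp j op r" "S \<subseteq> set (invoked (take p pre))" using assms by blast
  then show ?thesis by (intro exI[of _ p]) (auto simp: nth_append)
qed

lemma com_all_ext:
  "(\<forall>j op q h z. (j, PCom op q h z) \<in> sg \<longrightarrow> (\<exists>x j'. h = HHash x op q j') \<and>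
       (\<exists>p<length pre. \<exists>r. pre!p = OResp j op r \<and> ops h \<subseteq> set (invoked (take p pre)))) \<Longrightarrow>
   (\<forall>j op q h z. (j, PCom op q h z) \<in> sg \<longrightarrow> (\<exists>x j'. h = HHash x op q j') \<and>
       (\<exists>p<length (pre @ xs). \<exists>r. (pre @ xs)!p = OResp j op r \<and> ops h \<subseteq> set (invoked (take p (pre @ xs)))))"
  using com_ext by metis

lemma Inv_frame:
  assumes "Inv C sg pre" "\<forall>i. cH (C' i) = cH (C i) \<and> cc (C' i) = cc (C i) \<and> cu (C' i) = cu (C i)"
    "invoked [ob] = []" "resps [ob] = []"
  shows "Inv C' sg (pre @ [ob])"
proof -
  note I = assms(1)[unfolded Inv_def]
  have c5: "\<forall>j op q h z. (j, PCom op q h z) \<in> sg \<longrightarrow> (\<exists>x j'. h = HHash x op q j') \<and>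
       (\<exists>p<length pre. \<exists>r. pre!p = OResp j op r \<and> ops h \<subseteq> set (invoked (take p pre)))"
    using I by blast
  have e: "invoked (pre @ [ob]) = invoked pre" "resps (pre @ [ob]) = resps pre"
    using assms(3,4) by (simp_all add: obs_app_simps)
  show ?thesis unfolding Inv_def
    apply (intro conjI)
    prefer 5 apply (rule com_all_ext[OF c5])
    using I assms(2) unfolding e by simp_all
qed

lemma Inv_halt:
  assumes "Inv C sg pre" "halt_at (C, sg) i = Some (g', ob)"
  shows "Inv (fst g') (snd g') (pre @ [ob])"
proof -
  have g': "g' = (C(i := (C i)\<lparr>chalt := True\<rparr>), sg)" "ob = OHalt i"
    using assms(2) by (auto simp: halt_at_def)
  show ?thesis unfolding g' fst_conv snd_conv by (rule Inv_frame[OF assms(1)]) (simp_all add: obs_app_simps)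
qed

lemma Inv_inv:
  assumes "Inv C sg pre" "cu (C i) = None" "distinct (invoked (pre @ [OInvoke i op]))"
  shows "Inv (C(i := (C i)\<lparr>cu := Some op\<rparr>)) (insert (i, PInv op i) sg) (pre @ [OInvoke i op])"
proof -
  note I = assms(1)[unfolded Inv_def]
  have c5: "\<forall>j op q h z. (j, PCom op q h z) \<in> sg \<longrightarrow> (\<exists>x j'. h = HHash x op q j') \<and>
       (\<exists>p<length pre. \<exists>r. pre!p = OResp j op r \<and> ops h \<subseteq> set (invoked (take p pre)))"
    using I by blast
  note c5' = com_all_ext[OF c5, of "[OInvoke i op]"]
  have e: "invoked (pre @ [OInvoke i op]) = invoked pre @ [op]" "resps (pre @ [OInvoke i op]) = resps pre"
    by (simp_all add: obs_app_simps)
  have nop: "op \<notin> set (invoked pre)" using assms(3) e by simp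
  show ?thesis unfolding Inv_def
    apply (intro conjI)
    prefer 5 using c5' apply blast
    using I assms(2) nop unfolding e apply (auto simp: fun_upd_apply)
    apply blast+
    done
qed

lemma chain_upd:
  assumes "chain H" "H (l - 1) = Some x" "0 < l"
  shows "chain (if H l = None then H(l \<mapsto> HHash x op l j) else H)"
  unfolding chain_def
proof (intro allI impI)
  let ?H1 = "(if H l = None then H(l \<mapsto> HHash x op l j) else H)"
  fix l' h assume a1: "?H1 l' = Some h" and a2: "0 < l'"
  show "\<exists>x op j. h = HHash x op l' j \<and> ?H1 (l' - 1) = Some x"
  proof (cases "H l = None")
    case True
    show ?thesis
    proof (cases "l' = l")
      case True with a1 assms \<open>H l = None\<close> show ?thesis by auto
    next
      case False
      then have "H l' = Some h" using a1 True by auto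
      then obtain x' op' j' where "h = HHash x' op' l' j'" "H (l' - 1) = Some x'"
        using assms(1) a2 unfolding chain_def by blast
      moreover have "l' - 1 \<noteq> l" using True \<open>H (l' - 1) = Some x'\<close> by auto
      ultimately show ?thesis using True by auto
    qed
  next
    case False
    then have e: "?H1 = H" by auto
    then have "H l' = Some h" using a1 by simp
    then show ?thesis using e a2 assms(1) unfolding chain_def by simp
  qed
qed

lemma Inv_bc:
  assumes "Inv C sg pre" "q = Suc (cc (C i))" "(j, PCom op q h z) \<in> sg"
    "H' = (if cH (C i) q = None then (cH (C i))(q \<mapsto> HHash (the (cH (C i) (q - 1))) op q j) else cH (C i))"
    "H' q = Some h"
  shows "Inv (C(i := (C i)\<lparr>cH := H', cs := s', cc := Suc (cc (C i))\<rparr>)) sg (pre @ [OConfirm i op])"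
proof -
  note I = assms(1)[unfolded Inv_def]
  have c5: "\<forall>j op q h z. (j, PCom op q h z) \<in> sg \<longrightarrow> (\<exists>x j'. h = HHash x op q j') \<and>
       (\<exists>p<length pre. \<exists>r. pre!p = OResp j op r \<and> ops h \<subseteq> set (invoked (take p pre)))"
    using I by blast
  note c5' = com_all_ext[OF c5, of "[OConfirm i op]"]
  have e: "invoked (pre @ [OConfirm i op]) = invoked pre" "resps (pre @ [OConfirm i op]) = resps pre"
    by (simp_all add: obs_app_simps)
  have "cH (C i) (cc (C i)) \<noteq> None" using I by blast
  then obtain x where x: "cH (C i) (q - 1) = Some x" using assms(2) by auto
  have opI: "op \<in> set (invoked pre)"
  proof -
    obtain x' j' p r where "h = HHash x' op q j'" "ops h \<subseteq> set (invoked (take p pre))"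
      using c5 assms(3) by blast
    moreover have "set (invoked (take p pre)) \<subseteq> set (invoked pre)"
      by (metis append_take_drop_id invoked_def concat_append map_append set_append Un_upper1)
    ultimately show ?thesis by auto
  qed
  have "chain (cH (C i))" using I by blast
  from chain_upd[OF this x, of op j] have c0: "chain (if cH (C i) q = None then (cH (C i))(q \<mapsto> HHash x op q j) else cH (C i))"
    using assms(2) by simp
  have "H' = (if cH (C i) q = None then (cH (C i))(q \<mapsto> HHash x op q j) else cH (C i))"
    using assms(4) x by simp
  with c0 have ch: "chain H'" by simp
  have ops': "\<forall>l h. H' l = Some h \<longrightarrow> ops h \<subseteq> set (invoked pre)"
    using I x opI assms(4) by (auto split: if_splits)
  show ?thesis unfolding Inv_def
    apply (intro conjI)
    prefer 5 using c5' apply blast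
    using I assms(5) ch ops' unfolding e assms(2)[symmetric] apply (auto simp: fun_upd_apply)
    done
qed

lemma Inv_resp:
  assumes "Inv C sg pre" "cu (C i) = Some u"
    "scan sg i (cc (C i)) (cZ (C i)) 1 \<omega> (cH (C i)) [] [] = Some (H, \<gamma>, \<mu>)"
    "\<omega> \<noteq> []" "fst (last \<omega>) = u" "fst (snd (last \<omega>)) = i" "l = cc (C i) + length \<omega>"
  shows "Inv (C(i := (C i)\<lparr>cH := H, cZ := Z', cu := None\<rparr>)) (insert (i, PCom u l (the (H l)) z) sg) (pre @ [OResp i u r])"
proof -
  note I = assms(1)[unfolded Inv_def]
  have c5: "\<forall>j op q h z. (j, PCom op q h z) \<in> sg \<longrightarrow> (\<exists>x j'. h = HHash x op q j') \<and>
       (\<exists>p<length pre. \<exists>r. pre!p = OResp j op r \<and> ops h \<subseteq> set (invoked (take p pre)))"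
    using I by blast
  note c5' = com_all_ext[OF c5, of "[OResp i u r]"]
  have e: "invoked (pre @ [OResp i u r]) = invoked pre" "resps (pre @ [OResp i u r]) = resps pre @ [u]"
    by (simp_all add: obs_app_simps)
  have uI: "u \<in> set (invoked pre)" "u \<notin> set (resps pre)" using I assms(2) by blast+
  have d0: "cH (C i) (cc (C i) + 1 - 1) \<noteq> None" using I by simp
  have ch0: "chain (cH (C i))" using I by blast
  have o0: "\<forall>l h. cH (C i) l = Some h \<longrightarrow> ops h \<subseteq> set (invoked pre)" using I by blast
  have p0: "\<forall>j op. (j, PInv op j) \<in> sg \<longrightarrow> op \<in> set (invoked pre)" using I by blast
  note SP = scan_props[OF assms(3) zero_less_one d0 ch0 o0 p0]
  have ext: "cH (C i) \<subseteq>\<^sub>m H" using scan_ext[OF assms(3)] .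
  have chH: "chain H" and oH: "\<forall>l h. H l = Some h \<longrightarrow> ops h \<subseteq> set (invoked pre)" using SP by simp_all
  have lastH: "\<exists>x. H l = Some (HHash x u l i)"
  proof -
    have "length \<omega> - 1 < length \<omega>" using assms(4) by simp
    with SP obtain x where "H (cc (C i) + 1 + (length \<omega> - 1)) = Some (HHash x (fst (\<omega>!(length \<omega> - 1))) (cc (C i) + 1 + (length \<omega> - 1)) (fst (snd (\<omega>!(length \<omega> - 1)))))"
      by blast
    moreover have "\<omega>!(length \<omega> - 1) = last \<omega>" using assms(4) by (simp add: last_conv_nth)
    moreover have "cc (C i) + 1 + (length \<omega> - 1) = l" using assms(4,7) by (cases \<omega>) auto
    ultimately show ?thesis using assms(5,6) by auto
  qed
  then obtain x where hx: "H l = Some (HHash x u l i)" by blast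
  have cc0: "H (cc (C i)) \<noteq> None" using ext I by (auto simp: map_le_def dom_def)
  have newcom: "\<exists>p<length (pre @ [OResp i u r]). \<exists>r'. (pre @ [OResp i u r])!p = OResp i u r' \<and> ops (the (H l)) \<subseteq> set (invoked (take p (pre @ [OResp i u r])))"
  proof -
    have "ops (the (H l)) \<subseteq> set (invoked pre)" using oH[rule_format, OF hx] hx by simp
    then show ?thesis by (intro exI[of _ "length pre"]) auto
  qed
  have com': "\<forall>j op q h z'. (j, PCom op q h z') \<in> insert (i, PCom u l (the (H l)) z) sg \<longrightarrow> (\<exists>x j'. h = HHash x op q j') \<and>
       (\<exists>p<length (pre @ [OResp i u r]). \<exists>r'. (pre @ [OResp i u r])!p = OResp j op r' \<and> ops h \<subseteq> set (invoked (take p (pre @ [OResp i u r]))))"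
  proof (intro allI impI)
    fix j op q h z' assume "(j, PCom op q h z') \<in> insert (i, PCom u l (the (H l)) z) sg"
    then consider "(j, PCom op q h z') \<in> sg" | "j = i" "op = u" "q = l" "h = the (H l)" by auto
    then show "(\<exists>x j'. h = HHash x op q j') \<and>
       (\<exists>p<length (pre @ [OResp i u r]). \<exists>r'. (pre @ [OResp i u r])!p = OResp j op r' \<and> ops h \<subseteq> set (invoked (take p (pre @ [OResp i u r]))))"
    proof cases
      case 1 note cc5 = c5'[rule_format, OF 1] show ?thesis using cc5 by blast
    next
      case 2 then show ?thesis using newcom hx by auto
    qed
  qed
  show ?thesis unfolding Inv_def
    apply (intro conjI)
    prefer 5 using com' apply blast
    using I cc0 chH oH uI assms(2) unfolding e apply (auto simp: fun_upd_apply)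
    done
qed

lemma Inv_step:
  assumes "Inv (fst g) (snd g) pre" "step F n g e = Some (g', ob)" "distinct (invoked (pre @ [ob]))"
  shows "Inv (fst g') (snd g') (pre @ [ob])"
proof -
  obtain C sg where g: "g = (C, sg)" by (cases g) auto
  have I: "Inv C sg pre" using assms(1) g by simp
  have halt: "\<And>i. halt_at (C, sg) i = Some (g', ob) \<Longrightarrow> ?thesis" using Inv_halt[OF I] by blast
  show ?thesis
  proof (cases e)
    case (EInv i op)
    then have "cu (C i) = None" "g' = (C(i := (C i)\<lparr>cu := Some op\<rparr>), insert (i, PInv op i) sg)" "ob = OInvoke i op"
      using assms(2) g by (auto simp: step_def split: if_splits)
    then show ?thesis using Inv_inv[OF I, of i op] assms(3) by simp
  next
    case (EReply i \<omega>)
    show ?thesis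
    proof (cases "scan sg i (cc (C i)) (cZ (C i)) 1 \<omega> (cH (C i)) [] []")
      case None
      then show ?thesis using assms(2) g EReply halt by (auto simp: step_def split: if_splits)
    next
      case (Some T)
      then obtain H \<gamma> \<mu> where T: "scan sg i (cc (C i)) (cZ (C i)) 1 \<omega> (cH (C i)) [] [] = Some (H, \<gamma>, \<mu>)"
        by (cases T) auto
      show ?thesis
      proof (cases "\<omega> = [] \<or> Some (fst (last \<omega>)) \<noteq> cu (C i) \<or> fst (snd (last \<omega>)) \<noteq> i")
        case True
        then show ?thesis using assms(2) g EReply halt T by (auto simp: step_def split: if_splits)
      next
        case False
        then have cu: "cu (C i) = Some (fst (last \<omega>))" "\<omega> \<noteq> []" "fst (snd (last \<omega>)) = i" by auto
        define ok where "ok = commute F (Fstate F (cs (C i)) \<mu>) [fst (last \<omega>)] \<gamma>"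
        define z where "z = (if ok then Success else Abort)"
        define r where "r = (if ok then Some (snd (F (Fstate F (cs (C i)) \<mu>) (fst (last \<omega>)))) else None)"
        have "g' = ((C(i := (C i)\<lparr>cH := H, cZ := (cZ (C i))(cc (C i) + length \<omega> \<mapsto> z), cu := None\<rparr>)),
                 insert (i, PCom (fst (last \<omega>)) (cc (C i) + length \<omega>) (the (H (cc (C i) + length \<omega>))) z) sg) \<and>
          ob = OResp i (fst (last \<omega>)) r"
          using assms(2) g EReply T False cu unfolding ok_def z_def r_def by (auto simp: step_def Let_def split: if_splits)
        then show ?thesis using Inv_resp[OF I cu(1) T cu(2) refl cu(3) refl] by auto
      qed
    qed
  next
    case (EBcast i op q h z \<phi> j)
    let ?H' = "(if cH (C i) q = None then (cH (C i))(q \<mapsto> HHash (the (cH (C i) (q - 1))) op q j) else cH (C i))"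
    show ?thesis
    proof (cases "q = cc (C i) + 1 \<and> verify sg j \<phi> (PCom op q h z) \<and> ?H' q = Some h")
      case False
      then show ?thesis using assms(2) g EBcast halt by (auto simp: step_def Let_def split: if_splits)
    next
      case True
      then have v: "q = Suc (cc (C i))" "(j, PCom op q h z) \<in> sg" "?H' q = Some h"
        by (auto simp: verify_def)
      define s' where "s' = (if z = Success then fst (F (cs (C i)) op) else cs (C i))"
      have "g' = (C(i := (C i)\<lparr>cH := ?H', cs := s', cc := Suc (cc (C i))\<rparr>), sg) \<and> ob = OConfirm i op"
        using assms(2) g EBcast True unfolding s'_def by (auto simp: step_def Let_def split: if_splits)
      then show ?thesis using Inv_bc[OF I v(1,2) refl v(3)] by auto
    qed
  qed
qed

fun runst :: "('s \<Rightarrow> 'o \<Rightarrow> 's \<times> 'r) \<Rightarrow> nat \<Rightarrow> ('o, 's) gstate \<Rightarrow> 'o event list \<Rightarrow> ('o, 's) gstate" where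
  "runst F n g [] = g"
| "runst F n g (e # es) = (case step F n g e of None \<Rightarrow> g | Some (g', _) \<Rightarrow> runst F n g' es)"

lemma run_step:
  "run F n g es = Some obs \<Longrightarrow> length obs = length es \<and>
    (\<forall>p<length es. step F n (runst F n g (take p es)) (es!p) = Some (runst F n g (take (Suc p) es), obs!p))"
proof (induction es arbitrary: g obs)
  case Nil then show ?case by simp
next
  case (Cons e es)
  then obtain g' ob obs' where s: "step F n g e = Some (g', ob)" "run F n g' es = Some obs'" "obs = ob # obs'"
    by (auto split: option.splits)
  note IH = Cons.IH[OF s(2)]
  show ?case
  proof (intro conjI allI impI)
    show "length obs = length (e # es)" using IH s by simp
    fix p assume "p < length (e # es)"
    then show "step F n (runst F n g (take p (e # es))) ((e # es) ! p) = Some (runst F n g (take (Suc p) (e # es)), obs ! p)"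
      using IH s by (cases p) auto
  qed
qed

lemma invoked_take_sub: "set (invoked (take p xs)) \<subseteq> set (invoked xs)"
  by (metis append_take_drop_id invoked_def concat_append map_append set_append Un_upper1)

lemma distinct_invoked_take: "distinct (invoked xs) \<Longrightarrow> distinct (invoked (take p xs))"
  by (metis append_take_drop_id invoked_def concat_append map_append distinct_append)

lemma Inv_all:
  assumes "run F n (init s0) es = Some obs" "distinct (invoked obs)" "p \<le> length es"
  shows "Inv (fst (runst F n (init s0) (take p es))) (snd (runst F n (init s0) (take p es))) (take p obs)"
  using assms(3)
proof (induction p)
  case 0 then show ?case using Inv_init by simp
next
  case (Suc p)
  note RS = run_step[OF assms(1)]
  have st: "step F n (runst F n (init s0) (take p es)) (es!p) = Some (runst F n (init s0) (take (Suc p) es), obs!p)"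
    using RS Suc.prems by simp
  have tk: "take (Suc p) obs = take p obs @ [obs!p]" using RS Suc.prems by (simp add: take_Suc_conv_app_nth)
  have d: "distinct (invoked (take p obs @ [obs!p]))" using distinct_invoked_take[OF assms(2), of "Suc p"] tk by simp
  show ?case using Inv_step[OF Suc.IH st d] Suc.prems tk by simp
qed

lemma step_mono:
  assumes "step F n g e = Some (g', ob)"
  shows "cc (fst g i) \<le> cc (fst g' i) \<and> cH (fst g i) \<subseteq>\<^sub>m cH (fst g' i)"
proof -
  obtain C sg where g: "g = (C, sg)" by (cases g) auto
  show ?thesis
  proof (cases e)
    case (EInv x y) then show ?thesis using assms g by (auto simp: step_def split: if_splits)
  next
    case (EReply x \<omega>)
    show ?thesis
    proof (cases "scan sg x (cc (C x)) (cZ (C x)) 1 \<omega> (cH (C x)) [] []")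
      case None then show ?thesis using assms g EReply by (auto simp: step_def halt_at_def split: if_splits)
    next
      case (Some T)
      then obtain H \<gamma> \<mu> where T: "scan sg x (cc (C x)) (cZ (C x)) 1 \<omega> (cH (C x)) [] [] = Some (H, \<gamma>, \<mu>)"
        by (cases T) auto
      note E = scan_ext[OF T]
      show ?thesis using assms g EReply T E by (auto simp: step_def halt_at_def Let_def split: if_splits)
    qed
  next
    case (EBcast x op q h z \<phi> j)
    then show ?thesis using assms g by (auto simp: step_def halt_at_def Let_def map_le_def split: if_splits)
  qed
qed

lemma mono_range:
  assumes "run F n (init s0) es = Some obs" "p \<le> p'" "p' \<le> length es"
  shows "cc (fst (runst F n (init s0) (take p es)) i) \<le> cc (fst (runst F n (init s0) (take p' es)) i) \<and>
         cH (fst (runst F n (init s0) (take p es)) i) \<subseteq>\<^sub>m cH (fst (runst F n (init s0) (take p' es)) i)"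
  using assms(2,3)
proof (induction p')
  case 0 then show ?case by simp
next
  case (Suc p')
  show ?case
  proof (cases "p = Suc p'")
    case True then show ?thesis by simp
  next
    case False
    then have "p \<le> p'" using Suc.prems by simp
    note IH = Suc.IH[OF this] 
    have st: "step F n (runst F n (init s0) (take p' es)) (es!p') = Some (runst F n (init s0) (take (Suc p') es), obs!p')"
      using run_step[OF assms(1)] Suc.prems by simp
    show ?thesis using IH step_mono[OF st, of i] Suc.prems map_le_trans by fastforce
  qed
qed

lemma confirm_step:
  assumes "step F n g e = Some (g', OConfirm k o1)"
  shows "\<exists>q h z j. (j, PCom o1 q h z) \<in> snd g \<and> q = Suc (cc (fst g k)) \<and> cc (fst g' k) = q \<and> cH (fst g' k) q = Some h"
proof -
  obtain C sg where g: "g = (C, sg)" by (cases g) auto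
  show ?thesis
  proof (cases e)
    case (EInv x y) then show ?thesis using assms g by (auto simp: step_def split: if_splits)
  next
    case (EReply x \<omega>)
    then show ?thesis using assms g by (auto simp: step_def halt_at_def Let_def split: if_splits option.splits prod.splits)
  next
    case (EBcast x op q h z \<phi> j)
    then show ?thesis using assms g by (auto simp: step_def halt_at_def Let_def verify_def split: if_splits; blast)
  qed
qed

lemma chain_sub:
  assumes "chain H" "H l' = Some h'" "l' \<le> l" "H l = Some h"
  shows "ops h' \<subseteq> ops h"
  using assms(3,4)
proof (induction l arbitrary: h)
  case 0 then show ?case using assms(2) by simp
next
  case (Suc m)
  show ?case
  proof (cases "l' = Suc m")
    case True then show ?thesis using Suc.prems assms(2) by simp
  next
    case False
    obtain x op j where "h = HHash x op (Suc m) j" "H m = Some x"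
      using assms(1) Suc.prems(2) unfolding chain_def by fastforce
    moreover have "ops h' \<subseteq> ops x" using Suc.IH[OF _ \<open>H m = Some x\<close>] False Suc.prems(1) by simp
    ultimately show ?thesis by auto
  qed
qed

lemma uniq_pos:
  "distinct (concat (map f xs)) \<Longrightarrow> p < length xs \<Longrightarrow> p' < length xs \<Longrightarrow> f (xs!p) = [a] \<Longrightarrow> f (xs!p') = [a] \<Longrightarrow> p = p'"
proof (induction xs arbitrary: p p')
  case Nil then show ?case by simp
next
  case (Cons x xs)
  show ?case
  proof (cases p; cases p')
    fix m assume "p = 0" "p' = Suc m"
    then have "a \<in> set (f x)" "a \<in> set (concat (map f xs))" using Cons.prems
      by (simp_all, metis nth_mem list.set_intros(1))
    then show ?thesis using Cons.prems(1) by auto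
  next
    fix m assume "p = Suc m" "p' = 0"
    then have "a \<in> set (f x)" "a \<in> set (concat (map f xs))" using Cons.prems
      by (simp_all, metis nth_mem list.set_intros(1))
    then show ?thesis using Cons.prems(1) by auto
  next
    fix m m' assume "p = Suc m" "p' = Suc m'"
    then show ?thesis using Cons.IH[of m m'] Cons.prems by auto
  qed simp
qed

lemma mem_take:
  "a \<in> set (concat (map f (take p xs))) \<Longrightarrow> \<exists>b<p. b < length xs \<and> a \<in> set (f (xs!b))"
proof -
  assume "a \<in> set (concat (map f (take p xs)))"
  then obtain y where "y \<in> set (take p xs)" "a \<in> set (f y)" by auto
  then obtain b where "b < length (take p xs)" "take p xs ! b = y" by (auto simp: in_set_conv_nth)
  then show ?thesis using \<open>a \<in> set (f y)\<close> by auto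
qed

theorem lemma4:
  fixes F :: "'s \<Rightarrow> 'o \<Rightarrow> 's \<times> 'r" and s0 :: 's and n :: nat
    and es :: "'o event list" and obs :: "('o, 'r) obs list"
    and k t1 t2 :: nat and o1 o2 :: 'o
  assumes exec: "run F n (init s0) es = Some obs"
    and uniq: "distinct (invoked obs)"
    and order: "t1 < t2" and len: "t2 < length obs"
    and c1: "obs ! t1 = OConfirm k o1"
    and c2: "obs ! t2 = OConfirm k o2"
  shows "\<not> precedes obs o2 o1"
proof
  assume "precedes obs o2 o1"
  then obtain a b i i' r where ab: "a < b" "b < length obs" "obs ! a = OResp i o2 r" "obs ! b = OInvoke i' o1"
    unfolding precedes_def by blast
  define gS where "gS p = runst F n (init s0) (take p es)" for p
  note RS = run_step[OF exec]
  have L: "length obs = length es" using RS by simp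
  have st1: "step F n (gS t1) (es!t1) = Some (gS (Suc t1), OConfirm k o1)"
    using RS order len c1 L unfolding gS_def by auto
  have st2: "step F n (gS t2) (es!t2) = Some (gS (Suc t2), OConfirm k o2)"
    using RS order len c2 L unfolding gS_def by auto
  obtain q1 h1 z1 j1 where A: "(j1, PCom o1 q1 h1 z1) \<in> snd (gS t1)" "q1 = Suc (cc (fst (gS t1) k))"
    "cc (fst (gS (Suc t1)) k) = q1" "cH (fst (gS (Suc t1)) k) q1 = Some h1"
    using confirm_step[OF st1] by blast
  obtain q2 h2 z2 j2 where B: "(j2, PCom o2 q2 h2 z2) \<in> snd (gS t2)" "q2 = Suc (cc (fst (gS t2) k))"
    "cH (fst (gS (Suc t2)) k) q2 = Some h2"
    using confirm_step[OF st2] by blast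
  have m1: "cc (fst (gS (Suc t1)) k) \<le> cc (fst (gS t2) k)"
    using mono_range[OF exec, of "Suc t1" t2 k] order len L unfolding gS_def by simp
  have m2: "cH (fst (gS (Suc t1)) k) \<subseteq>\<^sub>m cH (fst (gS (Suc t2)) k)"
    using mono_range[OF exec, of "Suc t1" "Suc t2" k] order len L unfolding gS_def by simp
  have q12: "q1 \<le> q2" using A B m1 by simp
  have h1': "cH (fst (gS (Suc t2)) k) q1 = Some h1" using m2 A(4) by (auto simp: map_le_def dom_def)
  have I1: "Inv (fst (gS t1)) (snd (gS t1)) (take t1 obs)"
    using Inv_all[OF exec uniq, of t1] order len L unfolding gS_def by simp
  have I2: "Inv (fst (gS t2)) (snd (gS t2)) (take t2 obs)"
    using Inv_all[OF exec uniq, of t2] len L unfolding gS_def by simp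
  have I3: "Inv (fst (gS (Suc t2))) (snd (gS (Suc t2))) (take (Suc t2) obs)"
    using Inv_all[OF exec uniq, of "Suc t2"] len L unfolding gS_def by simp
  have IF: "Inv (fst (gS (length es))) (snd (gS (length es))) (take (length es) obs)"
    using Inv_all[OF exec uniq, of "length es"] unfolding gS_def by simp
  have dr: "distinct (resps obs)" using IF L unfolding Inv_def by simp
  obtain x j' where "h1 = HHash x o1 q1 j'" using I1 A(1) unfolding Inv_def by blast
  then have o1h1: "o1 \<in> ops h1" by simp
  have "chain (cH (fst (gS (Suc t2)) k))" using I3 unfolding Inv_def by blast
  from chain_sub[OF this h1' q12 B(3)] o1h1 have o1h2: "o1 \<in> ops h2" by blast
  obtain p r' where P: "p < length (take t2 obs)" "(take t2 obs)!p = OResp j2 o2 r'"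
    "ops h2 \<subseteq> set (invoked (take p (take t2 obs)))"
    using I2 B(1) unfolding Inv_def by blast
  have pl: "p < length obs" "obs!p = OResp j2 o2 r'" "p < t2" using P by auto
  have "set (invoked (take p (take t2 obs))) = set (invoked (take p obs))" using pl by (simp add: min_def)
  with P o1h2 have "o1 \<in> set (invoked (take p obs))" by auto
  then obtain b' where b': "b' < p" "b' < length obs" "o1 \<in> set ((\<lambda>x. case x of OInvoke i op \<Rightarrow> [op] | _ \<Rightarrow> []) (obs!b'))"
    using mem_take unfolding invoked_def by metis
  then obtain i'' where "obs!b' = OInvoke i'' o1" by (cases "obs!b'") auto
  then have "b' = b" using uniq_pos[OF uniq[unfolded invoked_def] b'(2) ab(2), of o1] ab(4) by simp
  moreover have "a = p" using uniq_pos[OF dr[unfolded resps_def] ab(2)[THEN less_trans[OF ab(1)]] pl(1), of o2] ab(3) pl(2) by simp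
  ultimately show False using ab(1) b'(1) by simp
qed

end
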